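(* Let $\mathcal{H}$ be a complex Hilbert space and let $A\in\mathcal{B}(\mathcal{H})$ be nonzero. Then \[ \|A\|\left(1-\frac12\left\|I-\frac{A}{\|A\|}\right\|^2\right)\le \omega(A). \]
   Context: $\mathcal{B}(\mathcal{H})$ denotes the algebra of bounded linear operators on $\mathcal{H}$, $I$ the identity operator; $\omega(A)=\sup_{\|x\|=1}|\langle Ax,x\rangle|$ is the numerical radius and $\|\cdot\|$ the operator norm. *)

theory Defs
  imports "HOL-Analysis.Analysis"
begin

text \<open>Complex inner product spaces (not in the distribution): a real normed vector space
  with a complex scalar multiplication compatible with the real one, and a complex inner
  product, linear in the first argument and conjugate-linear in the second, inducing the norm.\<close>

class complex_inner = real_normed_vector +
  fixes cscale :: "complex \<Rightarrow> 'a \<Rightarrow> 'a"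
    and cinner :: "'a \<Rightarrow> 'a \<Rightarrow> complex"
  assumes cscale_add_right: "cscale c (x + y) = cscale c x + cscale c y"
    and cscale_add_left: "cscale (c + d) x = cscale c x + cscale d x"
    and cscale_cscale: "cscale c (cscale d x) = cscale (c * d) x"
    and cscale_one: "cscale 1 x = x"
    and scaleR_cscale: "scaleR r x = cscale (complex_of_real r) x"
    and cinner_add_left: "cinner (x + y) z = cinner x z + cinner y z"
    and cinner_cscale_left: "cinner (cscale c x) y = c * cinner x y"
    and cinner_commute: "cinner y x = cnj (cinner x y)"
    and cinner_self_real: "Im (cinner x x) = 0"
    and cinner_self_nonneg: "0 \<le> Re (cinner x x)"
    and cinner_self_eq_0: "cinner x x = 0 \<longleftrightarrow> x = 0"
    and norm_eq_sqrt_cinner: "norm x = sqrt (Re (cinner x x))"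

class complex_hilbert = complex_inner + complete_space

definition bounded_operator :: "('a::complex_inner \<Rightarrow> 'a) \<Rightarrow> bool" where
  "bounded_operator A \<longleftrightarrow>
     (\<forall>x y. A (x + y) = A x + A y) \<and>
     (\<forall>c x. A (cscale c x) = cscale c (A x)) \<and>
     (\<exists>K. \<forall>x. norm (A x) \<le> norm x * K)"

definition numerical_radius :: "('a::complex_inner \<Rightarrow> 'a) \<Rightarrow> real" where
  "numerical_radius A = (SUP x\<in>{x. norm x = 1}. cmod (cinner (A x) x))"

end

theory Submission
  imports Defs
begin


lemma cinner_neg_left: "cinner (- x) z = - cinner x z"
proof -
  have "- x = cscale (complex_of_real (-1)) x" using scaleR_cscale[of "-1" x] by simp
  then show ?thesis using cinner_cscale_left[of "complex_of_real (-1)" x z] by simp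
qed

lemma cinner_diff_left: "cinner (x - y) z = cinner x z - cinner y z"
  using cinner_add_left[of x "- y" z] cinner_neg_left[of y z] by simp

lemma cinner_diff_right: "cinner z (x - y) = cinner z x - cinner z y"
  using cinner_commute[of "x - y" z] cinner_diff_left[of x y z] cinner_commute[of x z] cinner_commute[of y z]
  by (metis complex_cnj_cancel_iff complex_cnj_diff)

lemma re_cinner_sym: "Re (cinner y x) = Re (cinner x y)"
  using cinner_commute[of x y] by simp

lemma norm_sq: "(norm x)^2 = Re (cinner x x)"
  using norm_eq_sqrt_cinner[of x] cinner_self_nonneg[of x] by simp

lemma norm_diff_sq: "(norm (x - y))^2 = (norm x)^2 - 2 * Re (cinner x y) + (norm y)^2"
  unfolding norm_sq cinner_diff_left cinner_diff_right using re_cinner_sym[of x y] by simp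

lemma norm_add_sq: "(norm (x + y))^2 = (norm x)^2 + 2 * Re (cinner x y) + (norm y)^2"
  using norm_diff_sq[of x "- y"] cinner_neg_left[of y x] re_cinner_sym[of x "-y"] re_cinner_sym[of x y]
  by simp

lemma abs_re_cinner: "\<bar>Re (cinner x y)\<bar> \<le> ((norm x)^2 + (norm y)^2) / 2"
proof -
  have h1: "0 \<le> (norm x)^2 - 2 * Re (cinner x y) + (norm y)^2"
    using norm_diff_sq[of x y] zero_le_power2[of "norm (x - y)"] by simp
  have h2: "0 \<le> (norm x)^2 + 2 * Re (cinner x y) + (norm y)^2"
    using norm_add_sq[of x y] zero_le_power2[of "norm (x + y)"] by simp
  show ?thesis unfolding abs_le_iff using h1 h2 by (simp add: field_simps)
qed

lemma cinner_cscale_right: "cinner x (cscale c y) = cnj c * cinner x y"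
  using cinner_commute[of x "cscale c y"] cinner_cscale_left[of c y x] cinner_commute[of y x]
  by simp

lemma norm_cscale: "norm (cscale c x) = cmod c * norm x"
proof -
  define r where "r = Re (cinner x x)"
  have r: "cinner x x = complex_of_real r"
    unfolding r_def by (simp add: complex_eq_iff cinner_self_real)
  have "cinner (cscale c x) (cscale c x) = (c * cnj c) * cinner x x"
    by (simp add: cinner_cscale_left cinner_cscale_right mult.assoc)
  also have "\<dots> = complex_of_real ((cmod c)^2 * r)"
    using complex_norm_square[of c] by (simp add: r)
  finally have "Re (cinner (cscale c x) (cscale c x)) = (cmod c)^2 * Re (cinner x x)"
    by (simp add: r)
  then have "(norm (cscale c x))^2 = (cmod c * norm x)^2"
    by (simp add: norm_sq power_mult_distrib)
  then show ?thesis by (simp add: power2_eq_iff_nonneg)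
qed

lemma cmod_cinner_bound: "cmod (cinner x y) \<le> (norm x)^2 + (norm y)^2"
proof -
  have im: "Im (cinner x y) = Re (cinner (cscale (- \<i>) x) y)"
    using cinner_cscale_left[of "- \<i>" x y] by simp
  have "norm (cscale (- \<i>) x) = norm x" using norm_cscale[of "- \<i>" x] by simp
  then have "\<bar>Im (cinner x y)\<bar> \<le> ((norm x)^2 + (norm y)^2) / 2"
    using abs_re_cinner[of "cscale (- \<i>) x" y] im by simp
  then show ?thesis using cmod_le[of "cinner x y"] abs_re_cinner[of x y] by (simp add: field_simps)
qed

theorem theorem3p1:
  fixes A :: "'a::complex_hilbert \<Rightarrow> 'a"
  assumes "bounded_operator A"
    and "A \<noteq> (\<lambda>x. 0)"
  shows "onorm A * (1 - (1/2) * (onorm (\<lambda>x. x - cscale (complex_of_real (1 / onorm A)) (A x)))^2)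
           \<le> numerical_radius A"
proof -
  from assms(1) obtain K where add: "\<And>x y. A (x + y) = A x + A y"
    and sc: "\<And>c x. A (cscale c x) = cscale c (A x)" and bnd: "\<And>x. norm (A x) \<le> norm x * K"
    unfolding bounded_operator_def by blast
  have blA: "bounded_linear A"
    by (rule bounded_linear_intro[OF add _ bnd]) (simp add: scaleR_cscale sc)
  define a where "a = onorm A"
  have apos: "0 < a" unfolding a_def using onorm_pos_lt[OF blA] assms(2) by auto
  define B where "B = (\<lambda>x. cscale (complex_of_real (1 / a)) (A x))"
  have Beq: "\<And>x. B x = (1/a) *\<^sub>R A x" unfolding B_def by (simp add: scaleR_cscale)
  have blC: "bounded_linear (\<lambda>x. x - B x)"
    unfolding Beq by (intro bounded_linear_sub bounded_linear_ident bounded_linear_compose[OF bounded_linear_scaleR_right blA])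
  define N where "N = onorm (\<lambda>x. x - B x)"
  define w where "w = numerical_radius A"
  have bdd: "bdd_above ((\<lambda>x. cmod (cinner (A x) x)) ` {x. norm x = 1})"
  proof (rule bdd_aboveI2)
    fix x :: 'a assume "x \<in> {x. norm x = 1}"
    then have n1: "norm x = 1" by simp
    have "norm (A x) \<le> K" using bnd[of x] n1 by simp
    moreover have "0 \<le> norm (A x)" by simp
    ultimately have "(norm (A x))^2 \<le> K^2" by (meson power_mono norm_ge_zero order_trans)
    then show "cmod (cinner (A x) x) \<le> K^2 + 1"
      using cmod_cinner_bound[of "A x" x] n1 by simp
  qed
  have key: "(norm (A x))^2 \<le> a^2 * (2 * w / a - 1 + N^2)" if n1: "norm x = 1" for x
  proof -
    have "Re (cinner (A x) x) \<le> cmod (cinner (A x) x)" by (rule complex_Re_le_cmod)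
    also have "\<dots> \<le> w" unfolding w_def numerical_radius_def
      by (rule cSUP_upper[OF _ bdd]) (simp add: n1)
    finally have re: "Re (cinner (A x) x) \<le> w" .
    have "norm (x - B x) \<le> N * norm x" unfolding N_def by (rule onorm[OF blC])
    then have nb: "norm (x - B x) \<le> N" using n1 by simp
    have "(norm (x - B x))^2 \<le> N^2"
      using nb by (meson power_mono norm_ge_zero)
    moreover have "(norm (x - B x))^2 = 1 - 2 * (Re (cinner (A x) x) / a) + (norm (A x))^2 / a^2"
    proof -
      have "Re (cinner x (B x)) = Re (cinner (A x) x) / a"
        unfolding B_def using re_cinner_sym[of x "B x"] cinner_cscale_left[of "complex_of_real (1/a)" "A x" x]
        by (simp add: B_def)
      moreover have "norm (B x) = norm (A x) / a" unfolding Beq using apos by simp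
      ultimately show ?thesis using norm_diff_sq[of x "B x"] n1 by (simp add: power_divide)
    qed
    ultimately have "(norm (A x))^2 / a^2 \<le> N^2 - 1 + 2 * (w / a)"
      using re apos by (smt (verit) divide_right_mono)
    then have "(norm (A x))^2 \<le> a^2 * (N^2 - 1 + 2 * (w / a))"
      using apos by (simp add: divide_le_eq mult.commute)
    then show ?thesis by (simp add: algebra_simps)
  qed
  define t where "t = 2 * w / a - 1 + N^2"
  have "\<exists>x::'a. x \<noteq> 0" using assms(2) by (metis blA linear_simps(3) bounded_linear.linear)
  then obtain x0 :: 'a where "x0 \<noteq> 0" by blast
  then have "norm ((1 / norm x0) *\<^sub>R x0) = 1" by simp
  from key[OF this] have "0 \<le> a^2 * t" unfolding t_def by (meson order_trans zero_le_power2)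
  then have t0: "0 \<le> t" using apos by (simp add: zero_le_mult_iff)
  have "\<And>x. norm (A x) \<le> (a * sqrt t) * norm x"
  proof -
    fix x :: 'a
    show "norm (A x) \<le> (a * sqrt t) * norm x"
    proof (cases "x = 0")
      case True then show ?thesis using blA by (simp add: linear_simps(3) bounded_linear.linear)
    next
      case False
      define u where "u = (1 / norm x) *\<^sub>R x"
      have "norm u = 1" using False unfolding u_def by simp
      from key[OF this] have "(norm (A u))^2 \<le> (a * sqrt t)^2"
        using t0 by (simp add: t_def power_mult_distrib)
      moreover have "0 \<le> a * sqrt t" using apos t0 by simp
      ultimately have "norm (A u) \<le> a * sqrt t"
        by (rule power2_le_imp_le)
      moreover have "A u = (1 / norm x) *\<^sub>R A x" unfolding u_def
        by (simp add: linear.scaleR[OF bounded_linear.linear[OF blA]])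
      ultimately have "norm (A x) / norm x \<le> a * sqrt t" by simp
      then show ?thesis using False by (simp add: divide_le_eq)
    qed
  qed
  then have "a \<le> a * sqrt t" unfolding a_def
    by (intro onorm_bound) (use apos t0 a_def in auto)
  then have "1 \<le> sqrt t" using apos by simp
  then have "1 \<le> t" using real_sqrt_le_iff[of 1 t] by simp
  then have "1 \<le> 2 * w / a - 1 + N^2" unfolding t_def .
  then have "a * (1 - 1/2 * N^2) \<le> w" using apos by (simp add: field_simps)
  then show ?thesis unfolding a_def w_def N_def B_def .
qed

end
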